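(* For all integers $J\geq 0$ and $N\geq 0$: $\mathfrak{m}_{\mathrm{odd}}(0,8J+7;16N+r)\equiv 0\pmod 4$ for $r\in\{9,13\}$; $\mathfrak{m}_{\mathrm{odd}}(0,16J+15;16N+13)\equiv 0\pmod 8$; $\mathfrak{m}_{\mathrm{odd}}(0,64J+63;32N+29)\equiv 0\pmod{16}$; $\mathfrak{m}_{\mathrm{odd}}(0,128J+127;32N+29)\equiv 0\pmod{32}$.
   Context: For $a\in\{-2,-1,0,1,2\}$ and integer $t\geq0$, the integers $\mathfrak{m}_{\mathrm{odd}}(a,t;n)$ are defined by $\sum_{n\geq0}\mathfrak{m}_{\mathrm{odd}}(a,t;n)q^n=\sum\prod_{k=1}^t\frac{q^{n_k}}{1+aq^{n_k}+q^{2n_k}}$, the sum running over all $t$-tuples of odd positive integers $n_1<n_2<\cdots<n_t$ (for $t=0$ the series is $1$). *)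

theory Defs
  imports Main "HOL-Library.FuncSet"
begin

text \<open>Coefficients of 1/(1 + a x + x^2) = \<Sum>m. cheb a m * x^m.\<close>
fun cheb :: "int \<Rightarrow> nat \<Rightarrow> int" where
  "cheb a 0 = 1"
| "cheb a (Suc 0) = - a"
| "cheb a (Suc (Suc m)) = - a * cheb a (Suc m) - cheb a m"

text \<open>Coefficient of q^n in the sum over t-element sets S of odd positive integers of
  \<Prod>s\<in>S. q^s/(1 + a q^s + q^(2s)).  Expanding each factor as \<Sum>m. cheb a m * q^(s(m+1)),
  the coefficient is the sum over S and exponent choices f with \<Sum>s\<in>S. s(f s + 1) = n.
  Only sets S of odd numbers \<le> n can contribute.\<close>
definition m_odd :: "int \<Rightarrow> nat \<Rightarrow> nat \<Rightarrow> int" where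
  "m_odd a t n =
     (\<Sum>S \<in> {S. S \<subseteq> {k. odd k \<and> k \<le> n} \<and> card S = t}.
        \<Sum>f \<in> {f \<in> S \<rightarrow>\<^sub>E {..n}. (\<Sum>s\<in>S. s * (f s + 1)) = n}.
          \<Prod>s\<in>S. cheb a (f s))"

end

theory Submission
  imports Defs "HOL-Computational_Algebra.Formal_Power_Series" "HOL-Computational_Algebra.Polynomial"
begin

unbundle fps_syntax




abbreviation QQ :: "nat \<Rightarrow> int fps" where "QQ n \<equiv> fps_X ^ (2*n)"

fun gb :: "nat \<Rightarrow> nat \<Rightarrow> int fps" where
  "gb n 0 = 1"
| "gb 0 (Suc k) = 0"
| "gb (Suc n) (Suc k) = gb n k + QQ (Suc k) * gb n (Suc k)"

definition qp :: "nat \<Rightarrow> int fps" where "qp n = (\<Prod>i=1..n. 1 - QQ i)"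

lemma gb_zero: "n < k \<Longrightarrow> gb n k = 0"
proof (induction n arbitrary: k)
  case 0 then show ?case by (cases k) auto
next
  case (Suc n) then show ?case by (cases k) auto
qed

lemma qp_0[simp]: "qp 0 = 1" by (simp add: qp_def)
lemma qp_Suc: "qp (Suc n) = qp n * (1 - QQ (Suc n))"
  by (simp add: qp_def prod.nat_ivl_Suc')

lemma qp_nth0: "qp n $ 0 = 1"
  by (induction n) (auto simp: qp_Suc fps_mult_nth)

lemma qp_nz: "qp n \<noteq> 0"
  using qp_nth0[of n] by auto

lemma gb_prod: "k \<le> n \<Longrightarrow> gb n k * qp k * qp (n-k) = qp n"
proof (induction n arbitrary: k)
  case 0 then show ?case by simp
next
  case (Suc n)
  show ?case
  proof (cases k)
    case 0 then show ?thesis by simp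
  next
    case (Suc k')
    have A: "gb n k' * qp (Suc k') * qp (n - k') = qp n * (1 - QQ (Suc k'))"
    proof -
      have "gb n k' * qp (Suc k') * qp (n - k') = (gb n k' * qp k' * qp (n - k')) * (1 - QQ (Suc k'))"
        by (simp add: qp_Suc algebra_simps)
      then show ?thesis using Suc.IH[of k'] Suc.prems Suc by simp
    qed
    show ?thesis
    proof (cases "k' = n")
      case True
      then show ?thesis using A Suc by (simp add: gb_zero qp_Suc)
    next
      case False
      then have kn: "Suc k' \<le> n" using Suc Suc.prems by simp
      have nk: "n - k' = Suc (n - Suc k')" using kn by simp
      have B: "gb n (Suc k') * qp (Suc k') * qp (n - k') = qp n * (1 - QQ (n - k'))"
      proof -
        have "gb n (Suc k') * qp (Suc k') * qp (n - k') = (gb n (Suc k') * qp (Suc k') * qp (n - Suc k')) * (1 - QQ (n-k'))"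
          by (simp add: nk qp_Suc algebra_simps)
        then show ?thesis using Suc.IH[OF kn] by simp
      qed
      have "gb (Suc n) k * qp k * qp (Suc n - k) = gb n k' * qp (Suc k') * qp (n - k') + QQ (Suc k') * (gb n (Suc k') * qp (Suc k') * qp (n - k'))"
        using Suc by (simp add: algebra_simps)
      also have "\<dots> = qp n * (1 - QQ (Suc k')) + QQ (Suc k') * (qp n * (1 - QQ (n - k')))"
        using A B by simp
      also have "\<dots> = qp n * (1 - QQ (Suc k') * QQ (n - k'))" by (simp add: algebra_simps)
      also have "QQ (Suc k') * QQ (n - k') = QQ (Suc n)"
        using kn by (simp add: power_add[symmetric])
      finally show ?thesis by (simp add: qp_Suc)
    qed
  qed
qed

lemma gb_pascal2:
  assumes "k \<le> n"
  shows "gb (Suc n) (Suc k) = QQ (n-k) * gb n k + gb n (Suc k)"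
proof -
  have X: "qp (Suc k) * qp (n - k) \<noteq> 0" using qp_nz by simp
  have L: "gb (Suc n) (Suc k) * (qp (Suc k) * qp (n - k)) = qp (Suc n)"
    using gb_prod[of "Suc k" "Suc n"] assms by (simp add: mult.assoc)
  have R1: "QQ (n-k) * gb n k * (qp (Suc k) * qp (n - k)) = QQ (n-k) * qp n * (1 - QQ (Suc k))"
  proof -
    have "QQ (n-k) * gb n k * (qp (Suc k) * qp (n - k)) = QQ (n-k) * (gb n k * qp k * qp (n-k)) * (1 - QQ (Suc k))"
      by (simp add: qp_Suc algebra_simps)
    then show ?thesis using gb_prod[OF assms] by simp
  qed
  have R2: "gb n (Suc k) * (qp (Suc k) * qp (n - k)) = qp n * (1 - QQ (n - k))"
  proof (cases "k = n")
    case True then show ?thesis by (simp add: gb_zero)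
  next
    case False
    then have kn: "Suc k \<le> n" using assms by simp
    have nk: "n - k = Suc (n - Suc k)" using kn by simp
    have "gb n (Suc k) * (qp (Suc k) * qp (n - k)) = (gb n (Suc k) * qp (Suc k) * qp (n - Suc k)) * (1 - QQ (n-k))"
      by (simp add: nk qp_Suc algebra_simps)
    then show ?thesis using gb_prod[OF kn] by simp
  qed
  have "(QQ (n-k) * gb n k + gb n (Suc k)) * (qp (Suc k) * qp (n - k))
        = QQ (n-k) * qp n * (1 - QQ (Suc k)) + qp n * (1 - QQ (n - k))"
    using R1 R2 by (simp add: algebra_simps)
  also have "\<dots> = qp n * (1 - QQ (n-k) * QQ (Suc k))" by (simp add: algebra_simps)
  also have "QQ (n-k) * QQ (Suc k) = QQ (Suc n)"
    using assms by (simp add: power_add[symmetric])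
  finally have "(QQ (n-k) * gb n k + gb n (Suc k)) * (qp (Suc k) * qp (n - k)) = gb (Suc n) (Suc k) * (qp (Suc k) * qp (n - k))"
    using L by (simp add: qp_Suc)
  then show ?thesis using X by simp
qed

lemma gb_three:
  assumes "k \<le> n"
  shows "gb (Suc (Suc n)) (Suc k) = (1 + QQ (Suc n)) * gb n k + QQ (Suc n - k) * (if k = 0 then 0 else gb n (k-1)) + QQ (Suc k) * gb n (Suc k)"
proof -
  have "gb (Suc (Suc n)) (Suc k) = QQ (Suc n - k) * gb (Suc n) k + gb (Suc n) (Suc k)"
    using gb_pascal2[of k "Suc n"] assms by simp
  also have "gb (Suc n) (Suc k) = gb n k + QQ (Suc k) * gb n (Suc k)" by simp
  also have "gb (Suc n) k = (if k = 0 then 1 else gb n (k-1) + QQ k * gb n k)"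
    by (cases k) auto
  finally show ?thesis
    using assms by (cases k) (auto simp: algebra_simps power_add[symmetric])
qed



fun V :: "nat \<Rightarrow> int fps poly" where
  "V 0 = [:2:]" | "V (Suc 0) = [:0,1:]" | "V (Suc (Suc j)) = [:0,1:] * V (Suc j) - V j"

lemma V_rec_nat: "1 \<le> m \<Longrightarrow> [:0,1:] * V m = V (m+1) + V (m-1)"
  by (cases m) (auto)

lemma V_rec: "[:0,1:] * V (nat \<bar>j\<bar>) = V (nat \<bar>j+1\<bar>) + V (nat \<bar>j-1\<bar>)"
proof -
  consider "j \<ge> 1" | "j = 0" | "j \<le> -1" by linarith
  then show ?thesis
  proof cases
    case 1
    then have "nat \<bar>j+1\<bar> = nat \<bar>j\<bar> + 1" "nat \<bar>j-1\<bar> = nat \<bar>j\<bar> - 1" "1 \<le> nat \<bar>j\<bar>" by auto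
    then show ?thesis using V_rec_nat by simp
  next
    case 2
    then show ?thesis by (simp add: numeral_2_eq_2)
  next
    case 3
    then have "nat \<bar>j-1\<bar> = nat \<bar>j\<bar> + 1" "nat \<bar>j+1\<bar> = nat \<bar>j\<bar> - 1" "1 \<le> nat \<bar>j\<bar>" by auto
    then show ?thesis using V_rec_nat by (simp add: add.commute)
  qed
qed

definition fac :: "nat \<Rightarrow> int fps poly" where
  "fac s = [: 1 + fps_X^(2*s), fps_X^s :]"

definition B :: "nat \<Rightarrow> int fps poly" where
  "B L = (\<Prod>k\<in>{1..L}. fac (2*k-1))"

lemma B_Suc: "B (Suc L) = fac (2*L+1) * B L"
  by (simp add: B_def prod.nat_ivl_Suc' mult.commute)

definition aa :: "nat \<Rightarrow> int \<Rightarrow> int fps" where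
  "aa L j = (if \<bar>j\<bar> \<le> int L then fps_X^(nat (j*j)) * gb (2*L) (nat (int L + j)) else 0)"

lemma sum_shift_int:
  fixes f :: "int \<Rightarrow> 'a::comm_monoid_add"
  shows "(\<Sum>j\<in>{a..b}. f (j+d)) = (\<Sum>j\<in>{a+d..b+d}. f j)"
  by (rule sum.reindex_bij_witness[of _ "\<lambda>j. j - d" "\<lambda>j. j + d"]) auto

lemma sum_extend_int:
  fixes f :: "int \<Rightarrow> 'a::comm_monoid_add"
  assumes "a' \<le> a" "b \<le> b'" "\<And>j. j \<in> {a'..b'} \<Longrightarrow> j \<notin> {a..b} \<Longrightarrow> f j = 0"
  shows "(\<Sum>j\<in>{a..b}. f j) = (\<Sum>j\<in>{a'..b'}. f j)"
  by (rule sum.mono_neutral_left) (use assms in auto)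

lemma exp_lemma1:
  fixes i :: int and L :: nat
  assumes "\<bar>i - 1\<bar> \<le> int L"
  shows "nat ((i-1)*(i-1)) + (2*L+1) = nat (i*i) + 2 * nat (int L + 1 - i)"
proof -
  have p: "(i-1)*(i-1) \<ge> 0" "i*i \<ge> 0" "int L + 1 - i \<ge> 0" using assms by auto
  have eq: "(i-1)*(i-1) + (2*int L+1) = i*i + 2*(int L+1-i)" by (simp add: algebra_simps)
  then have "nat ((i-1)*(i-1) + (2*int L+1)) = nat (i*i + 2*(int L+1-i))" by simp
  then show ?thesis using p by (simp add: nat_add_distrib nat_mult_distrib)
qed

lemma exp_lemma2:
  fixes i :: int and L :: nat
  assumes "\<bar>i + 1\<bar> \<le> int L"
  shows "nat ((i+1)*(i+1)) + (2*L+1) = nat (i*i) + 2 * nat (int L + 1 + i)"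
proof -
  have p: "(i+1)*(i+1) \<ge> 0" "i*i \<ge> 0" "int L + 1 + i \<ge> 0" using assms by auto
  have eq: "(i+1)*(i+1) + (2*int L+1) = i*i + 2*(int L+1+i)" by (simp add: algebra_simps)
  then have "nat ((i+1)*(i+1) + (2*int L+1)) = nat (i*i + 2*(int L+1+i))" by simp
  then show ?thesis using p by (simp add: nat_add_distrib nat_mult_distrib)
qed

lemma aa_rec:
  assumes "\<bar>i\<bar> \<le> int L + 1"
  shows "aa (Suc L) i = (1 + fps_X^(2*(2*L+1))) * aa L i + fps_X^(2*L+1) * (aa L (i-1) + aa L (i+1))"
proof -
  consider "i = int L + 1" | "i = - int L - 1" | "\<bar>i\<bar> \<le> int L" using assms by linarith
  then show ?thesis
  proof cases
    case 1
    have gnn: "\<And>n. gb n n = 1" by (induct_tac n) (auto simp: gb_zero)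
    have e: "nat (i*i) = nat ((i-1)*(i-1)) + (2*L+1)"
      using exp_lemma1[of i L] 1 by simp
    have l: "aa (Suc L) i = fps_X^(nat (i*i))"
    proof -
      have "nat (int (Suc L) + i) = 2 * Suc L" using 1 by simp
      then show ?thesis using 1 gnn[of "2 * Suc L"] by (simp add: aa_def del: gb.simps)
    qed
    have r1: "aa L i = 0" "aa L (i+1) = 0" using 1 by (auto simp: aa_def)
    have r2: "aa L (i-1) = fps_X^(nat ((i-1)*(i-1)))"
    proof -
      have "nat (int L + (i-1)) = 2 * L" using 1 by simp
      then show ?thesis using 1 gnn[of "2 * L"] by (simp add: aa_def del: gb.simps)
    qed
    show ?thesis unfolding l r1 r2 e by (simp add: power_add algebra_simps)
  next
    case 2
    have e: "nat (i*i) = nat ((i+1)*(i+1)) + (2*L+1)"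
      using exp_lemma2[of i L] 2 by simp
    show ?thesis using 2
      by (simp add: aa_def e power_add algebra_simps)
  next
    case 3
    define k where "k = nat (int L + i)"
    have k: "k \<le> 2*L" "int k = int L + i" using 3 by (auto simp: k_def)
    have g3: "gb (Suc (Suc (2*L))) (Suc k) = (1 + QQ (Suc (2*L))) * gb (2*L) k
        + QQ (Suc (2*L) - k) * (if k = 0 then 0 else gb (2*L) (k-1)) + QQ (Suc k) * gb (2*L) (Suc k)"
      using gb_three[of k "2*L"] k by simp
    have lhs: "aa (Suc L) i = fps_X^(nat (i*i)) * gb (Suc (Suc (2*L))) (Suc k)"
    proof -
      have "nat (int (Suc L) + i) = Suc k" using k by simp
      then show ?thesis using 3 by (simp add: aa_def del: gb.simps)
    qed
    have t1: "fps_X^(nat (i*i)) * QQ (Suc (2*L) - k) * (if k = 0 then 0 else gb (2*L) (k-1))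
              = fps_X^(2*L+1) * aa L (i-1)"
    proof (cases "k = 0")
      case True
      then have "\<not> \<bar>i-1\<bar> \<le> int L" using k by linarith
      then show ?thesis using True by (simp add: aa_def)
    next
      case False
      then have h: "\<bar>i-1\<bar> \<le> int L" using k 3 by linarith
      have a1: "nat (int L + (i-1)) = k - 1" using k False by linarith
      have a2: "Suc (2*L) - k = nat (int L + 1 - i)" using k by linarith
      have "fps_X^(nat (i*i)) * QQ (Suc (2*L) - k) = (fps_X^(nat (i*i) + 2 * nat (int L + 1 - i)) :: int fps)"
        unfolding a2 by (simp add: power_add)
      also have "\<dots> = fps_X^(2*L+1) * fps_X^(nat ((i-1)*(i-1)))"
        unfolding exp_lemma1[OF h, symmetric] by (simp add: power_add)
      finally show ?thesis using False h unfolding aa_def a1 by (simp add: mult.assoc)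
    qed
    have t2: "fps_X^(nat (i*i)) * QQ (Suc k) * gb (2*L) (Suc k)
              = fps_X^(2*L+1) * aa L (i+1)"
    proof (cases "k = 2*L")
      case True
      then have "\<not> \<bar>i+1\<bar> \<le> int L" using k by linarith
      then show ?thesis using True by (simp add: aa_def gb_zero)
    next
      case False
      then have h: "\<bar>i+1\<bar> \<le> int L" using k 3 by linarith
      have a1: "nat (int L + (i+1)) = Suc k" using k False by linarith
      have a2: "Suc k = nat (int L + 1 + i)" using k by linarith
      have "fps_X^(nat (i*i)) * QQ (Suc k) = (fps_X^(nat (i*i) + 2 * nat (int L + 1 + i)) :: int fps)"
        unfolding a2 by (simp add: power_add)
      also have "\<dots> = fps_X^(2*L+1) * fps_X^(nat ((i+1)*(i+1)))"
        unfolding exp_lemma2[OF h, symmetric] by (simp add: power_add)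
      finally show ?thesis using False h unfolding aa_def a1 by (simp add: mult.assoc del: gb.simps)
    qed
    have t0: "aa L i = fps_X^(nat (i*i)) * gb (2*L) k" using 3 by (simp add: aa_def k_def)
    have "aa (Suc L) i = (1 + QQ (Suc (2*L))) * (fps_X^(nat (i*i)) * gb (2*L) k)
         + fps_X^(nat (i*i)) * QQ (Suc (2*L) - k) * (if k = 0 then 0 else gb (2*L) (k-1))
         + fps_X^(nat (i*i)) * QQ (Suc k) * gb (2*L) (Suc k)"
      unfolding lhs g3 by (simp add: algebra_simps)
    also have "\<dots> = (1 + fps_X^(2*(2*L+1))) * aa L i + fps_X^(2*L+1) * (aa L (i-1) + aa L (i+1))"
      unfolding t0 t1 t2 by (simp add: algebra_simps)
    finally show ?thesis .
  qed
qed


lemma fac_V: "fac s * p = smult (1 + fps_X^(2*s)) p + smult (fps_X^s) ([:0,1:] * p)"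
  by (simp add: fac_def mult_pCons_left)

lemma aa_out: "\<not> \<bar>j\<bar> \<le> int L \<Longrightarrow> aa L j = 0"
  by (simp add: aa_def)

lemma jtp: "2 * B L = (\<Sum>j\<in>{-int L..int L}. smult (aa L j) (V (nat \<bar>j\<bar>)))"
proof (induction L)
  case 0
  have "aa 0 0 = 1" by (simp add: aa_def)
  then show ?case by (simp add: B_def numeral_poly)
next
  case (Suc L)
  define c where "c = (1 + fps_X^(2*(2*L+1)) :: int fps)"
  define d where "d = (fps_X^(2*L+1) :: int fps)"
  define R where "R = {- int L - 1..int L + 1}"
  have "2 * B (Suc L) = fac (2*L+1) * (2 * B L)" by (simp add: B_Suc algebra_simps)
  also have "\<dots> = (\<Sum>j\<in>{-int L..int L}. smult (aa L j) (fac (2*L+1) * V (nat \<bar>j\<bar>)))"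
    unfolding Suc by (simp add: sum_distrib_left mult_smult_right)
  also have "\<dots> = (\<Sum>j\<in>{-int L..int L}. smult (c * aa L j) (V (nat \<bar>j\<bar>)))
      + (\<Sum>j\<in>{-int L..int L}. smult (d * aa L j) (V (nat \<bar>j+1\<bar>)))
      + (\<Sum>j\<in>{-int L..int L}. smult (d * aa L j) (V (nat \<bar>j-1\<bar>)))"
    unfolding fac_V V_rec c_def[symmetric] d_def[symmetric]
    by (simp add: sum.distrib smult_add_right algebra_simps)
  also have "(\<Sum>j\<in>{-int L..int L}. smult (c * aa L j) (V (nat \<bar>j\<bar>)))
      = (\<Sum>j\<in>R. smult (c * aa L j) (V (nat \<bar>j\<bar>)))"
    unfolding R_def by (rule sum_extend_int) (auto simp: aa_out)
  also have "(\<Sum>j\<in>{-int L..int L}. smult (d * aa L j) (V (nat \<bar>j+1\<bar>)))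
      = (\<Sum>j\<in>{-int L..int L}. (\<lambda>i. smult (d * aa L (i-1)) (V (nat \<bar>i\<bar>))) (j+1))"
    by simp
  also have "\<dots> = (\<Sum>i\<in>{-int L+1..int L+1}. smult (d * aa L (i-1)) (V (nat \<bar>i\<bar>)))"
    by (rule sum_shift_int)
  also have "\<dots> = (\<Sum>i\<in>R. smult (d * aa L (i-1)) (V (nat \<bar>i\<bar>)))"
    unfolding R_def by (rule sum_extend_int) (auto simp: aa_out)
  also have "(\<Sum>j\<in>{-int L..int L}. smult (d * aa L j) (V (nat \<bar>j-1\<bar>)))
      = (\<Sum>j\<in>{-int L..int L}. (\<lambda>i. smult (d * aa L (i+1)) (V (nat \<bar>i\<bar>))) (j+(-1)))"
    by simp
  also have "\<dots> = (\<Sum>i\<in>{-int L+(-1)..int L+(-1)}. smult (d * aa L (i+1)) (V (nat \<bar>i\<bar>)))"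
    by (rule sum_shift_int)
  also have "\<dots> = (\<Sum>i\<in>R. smult (d * aa L (i+1)) (V (nat \<bar>i\<bar>)))"
    unfolding R_def by (rule sum_extend_int) (auto simp: aa_out)
  also have "(\<Sum>j\<in>R. smult (c * aa L j) (V (nat \<bar>j\<bar>)))
      + (\<Sum>i\<in>R. smult (d * aa L (i-1)) (V (nat \<bar>i\<bar>)))
      + (\<Sum>i\<in>R. smult (d * aa L (i+1)) (V (nat \<bar>i\<bar>)))
      = (\<Sum>i\<in>R. smult (aa (Suc L) i) (V (nat \<bar>i\<bar>)))"
    unfolding sum.distrib[symmetric] smult_add_left[symmetric]
  proof (rule sum.cong[OF refl])
    fix i assume "i \<in> R"
    then have "\<bar>i\<bar> \<le> int L + 1" unfolding R_def by auto
    then show "smult (c * aa L i + d * aa L (i - 1) + d * aa L (i + 1)) (V (nat \<bar>i\<bar>)) =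
          smult (aa (Suc L) i) (V (nat \<bar>i\<bar>))"
      using aa_rec[of i L] unfolding c_def d_def by (simp add: algebra_simps)
  qed
  also have "R = {- int (Suc L)..int (Suc L)}" unfolding R_def by auto
  finally show ?case .
qed



fun c :: "nat \<Rightarrow> nat \<Rightarrow> int" where
  "c 0 t = (if t = 0 then 2 else 0)"
| "c (Suc 0) t = (if t = 1 then 1 else 0)"
| "c (Suc (Suc j)) t = (case t of 0 \<Rightarrow> 0 | Suc t' \<Rightarrow> c (Suc j) t') - c j t"

lemma coeff_x_mult: "coeff ([:0,1:] * (p :: int fps poly)) t = (case t of 0 \<Rightarrow> 0 | Suc t' \<Rightarrow> coeff p t')"
  by (cases t) (auto simp: mult_pCons_left)

lemma coeff_V: "coeff (V j) t = fps_const (c j t)"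
proof (induction j arbitrary: t rule: V.induct)
  case 1 then show ?case by (cases t) (auto simp: numeral_fps_const)
next
  case 2 then show ?case by (cases t) (auto simp: coeff_pCons split: nat.splits)
next
  case (3 j) then show ?case
    by (cases t) (auto simp: coeff_x_mult fps_const_sub)
qed

definition eqK :: "nat \<Rightarrow> int fps \<Rightarrow> int fps \<Rightarrow> bool" where
  "eqK K f g \<longleftrightarrow> (\<forall>n<K. f $ n = g $ n)"

lemma eqK_refl[simp]: "eqK K f f" by (simp add: eqK_def)
lemma eqK_sym: "eqK K f g \<Longrightarrow> eqK K g f" by (simp add: eqK_def)
lemma eqK_trans: "eqK K f g \<Longrightarrow> eqK K g h \<Longrightarrow> eqK K f h" by (simp add: eqK_def)
lemma eqK_mono: "eqK K f g \<Longrightarrow> K' \<le> K \<Longrightarrow> eqK K' f g" by (simp add: eqK_def)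

lemma eqK_add: "eqK K f g \<Longrightarrow> eqK K f' g' \<Longrightarrow> eqK K (f + f') (g + g')"
  by (simp add: eqK_def)

lemma eqK_mult_left: "eqK K f g \<Longrightarrow> eqK K (h * f) (h * g)"
  by (simp add: eqK_def fps_mult_nth)

lemma eqK_mult_right: "eqK K f g \<Longrightarrow> eqK K (f * h) (g * h)"
  using eqK_mult_left[of K f g h] by (simp add: mult.commute)

lemma eqK_mult: "eqK K f g \<Longrightarrow> eqK K f' g' \<Longrightarrow> eqK K (f * f') (g * g')"
  by (meson eqK_mult_left eqK_mult_right eqK_trans)

lemma eqK_sum: "(\<And>i. i \<in> A \<Longrightarrow> eqK K (f i) (g i)) \<Longrightarrow> eqK K (sum f A) (sum g A)"
  by (simp add: eqK_def fps_sum_nth)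

lemma eqK_prod: "finite A \<Longrightarrow> (\<And>i. i \<in> A \<Longrightarrow> eqK K (f i) (g i)) \<Longrightarrow> eqK K (prod f A) (prod g A)"
  by (induction A rule: finite_induct) (auto intro: eqK_mult)

lemma eqK_Xpow: "eqK m f g \<Longrightarrow> eqK (m + e) (fps_X^e * f) (fps_X^e * g)"
  by (auto simp: eqK_def fps_X_power_mult_nth)

lemma eqK_cancel:
  assumes "Y $ 0 = 1" "eqK K (FA * Y) (FB * Y)"
  shows "eqK K FA FB"
  unfolding eqK_def
proof (intro allI impI)
  fix n assume "n < K"
  then show "FA $ n = FB $ n"
  proof (induction n rule: less_induct)
    case (less n)
    have "(FA * Y) $ n = (FB * Y) $ n" using assms(2) less.prems by (simp add: eqK_def)
    then have "(\<Sum>i=0..n. FA$i * Y$(n-i)) = (\<Sum>i=0..n. FB$i * Y$(n-i))" by (simp add: fps_mult_nth)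
    moreover have "\<And>F::int fps. (\<Sum>i=0..n. F$i * Y$(n-i)) = (\<Sum>i\<in>{0..<n}. F$i * Y$(n-i)) + F$n * Y$0"
    proof -
      fix F :: "int fps"
      have "{0..n} = insert n {0..<n}" by auto
      then show "(\<Sum>i=0..n. F$i * Y$(n-i)) = (\<Sum>i\<in>{0..<n}. F$i * Y$(n-i)) + F$n * Y$0"
        by (simp add: add.commute)
    qed
    moreover have "(\<Sum>i\<in>{0..<n}. FA$i * Y$(n-i)) = (\<Sum>i\<in>{0..<n}. FB$i * Y$(n-i))"
      using less by (intro sum.cong) auto
    ultimately show ?case using assms(1) by simp
  qed
qed

lemma eqK_cancel2:
  assumes "eqK K (2 * FA) (2 * FB)" shows "eqK K FA FB"
  using assms by (simp add: eqK_def numeral_fps_const)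

lemma qp_cong_aux: "eqK (2*(a+1)) (qp (a + d)) (qp a)"
proof (induction d)
  case 0 then show ?case by simp
next
  case (Suc d)
  have "qp (a + Suc d) = qp (a + d) - fps_X^(2*(Suc (a+d))) * qp (a + d)"
    by (simp add: qp_Suc algebra_simps)
  moreover have "eqK (2*(a+1)) (fps_X^(2*(Suc (a+d))) * qp (a + d)) 0"
    unfolding eqK_def
  proof (intro allI impI)
    fix n :: nat assume "n < 2*(a+1)"
    then show "(fps_X^(2*(Suc (a+d))) * qp (a + d)) $ n = 0 $ n"
      by (subst fps_X_power_mult_nth) simp
  qed
  ultimately show ?case using Suc by (auto simp: eqK_def)
qed

lemma qp_cong: "a \<le> b \<Longrightarrow> eqK (2*(a+1)) (qp b) (qp a)"
  using qp_cong_aux[of a "b - a"] by simp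

lemma gb_nth0: "gb n k $ 0 = (if k \<le> n then 1 else 0)"
proof (induction n arbitrary: k)
  case 0 then show ?case by (cases k) auto
next
  case (Suc n) then show ?case by (cases k) (auto simp: fps_X_power_mult_nth)
qed

lemma gb_cong:
  assumes "k \<le> 2*L" "L - m \<le> k" "k \<le> L + m" "m \<le> L"
  shows "eqK (2*(L-m+1)) (gb (2*L) k) (gb (2*L) L)"
proof -
  have e1: "eqK (2*(L-m+1)) (qp k) (qp L)"
  proof (cases "k \<le> L")
    case True
    have "2*(L-m+1) \<le> 2*(k+1)" using assms by simp
    then show ?thesis using qp_cong[of k L] True by (meson eqK_sym eqK_mono)
  next
    case False
    have "2*(L-m+1) \<le> 2*(L+1)" by simp
    then show ?thesis using qp_cong[of L k] False by (meson eqK_mono nat_le_linear)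
  qed
  have e2: "eqK (2*(L-m+1)) (qp (2*L-k)) (qp L)"
  proof (cases "2*L-k \<le> L")
    case True
    have "2*(L-m+1) \<le> 2*(2*L-k+1)" using assms by simp
    then show ?thesis using qp_cong[of "2*L-k" L] True by (meson eqK_sym eqK_mono)
  next
    case False
    have "2*(L-m+1) \<le> 2*(L+1)" by simp
    then show ?thesis using qp_cong[of L "2*L-k"] False by (meson eqK_mono nat_le_linear)
  qed
  have "eqK (2*(L-m+1)) (gb (2*L) k * (qp k * qp (2*L-k))) (gb (2*L) k * (qp L * qp L))"
    by (intro eqK_mult_left eqK_mult e1 e2)
  moreover have "gb (2*L) k * (qp k * qp (2*L-k)) = gb (2*L) L * (qp L * qp L)"
    using gb_prod[of k "2*L"] gb_prod[of L "2*L"] assms by (simp add: mult.assoc mult_2)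
  ultimately have "eqK (2*(L-m+1)) (gb (2*L) k * (qp L * qp L)) (gb (2*L) L * (qp L * qp L))"
    by (metis eqK_sym)
  then show ?thesis by (rule eqK_cancel[rotated]) (simp add: fps_mult_nth qp_nth0)
qed



definition Xs :: "nat \<Rightarrow> int fps" where
  "Xs s = Abs_fps (\<lambda>k. if s dvd k \<and> s \<le> k then cheb 0 (k div s - 1) else 0)"

lemma Xs_mul:
  assumes s: "0 < s"
  shows "Xs s * (1 + fps_X^(2*s)) = fps_X^s"
proof (rule fps_ext)
  fix k
  have "(Xs s * (1 + fps_X^(2*s))) $ k = Xs s $ k + (if k < 2*s then 0 else Xs s $ (k - 2*s))"
    by (simp add: distrib_left fps_X_power_mult_right_nth)
  also have "\<dots> = (fps_X^s :: int fps) $ k"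
  proof (cases "s dvd k \<and> s \<le> k")
    case True
    then obtain m where m: "k = s * (m+1)" by (metis dvd_def Suc_eq_plus1 mult_0_right not0_implies_Suc le_zero_eq s not_less_zero)
    have kd: "k div s - 1 = m" using m s by simp
    consider "m = 0" | "m = 1" | "m \<ge> 2" by linarith
    then show ?thesis
    proof cases
      case 1 then show ?thesis using m s True by (simp add: Xs_def)
    next
      case 2 then show ?thesis using m s True by (simp add: Xs_def)
    next
      case 3
      then obtain m' where m': "m = Suc (Suc m')" by (metis add_2_eq_Suc le_iff_add)
      have "k - 2*s = s * (m' + 1)" using m m' by (simp add: algebra_simps)
      then have "Xs s $ (k - 2*s) = cheb 0 m'" using s by (simp add: Xs_def)
      moreover have "Xs s $ k = cheb 0 m" using True kd by (simp add: Xs_def)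
      moreover have "\<not> k < 2*s" "k \<noteq> s" using m m' s by (auto simp: algebra_simps)
      ultimately show ?thesis using m' by simp
    qed
  next
    case False
    have "\<not> (s dvd (k - 2*s) \<and> s \<le> k - 2*s) \<or> k < 2*s"
    proof (rule ccontr)
      assume "\<not> ?thesis"
      then have "s dvd (k - 2*s)" "2*s \<le> k" by auto
      then have "s dvd (k - 2*s + 2*s)" by (intro dvd_add) auto
      then have "s dvd k" using \<open>2*s \<le> k\<close> by simp
      then show False using False \<open>2*s \<le> k\<close> by simp
    qed
    moreover have "k \<noteq> s" using False by auto
    ultimately show ?thesis using False by (auto simp: Xs_def)
  qed
  finally show "(Xs s * (1 + fps_X^(2*s))) $ k = (fps_X^s :: int fps) $ k" .
qed

lemma fac_split: "0 < s \<Longrightarrow> fac s = smult (1 + fps_X^(2*s)) [:1, Xs s:]"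
  using Xs_mul[of s] by (simp add: fac_def mult.commute)

definition DD :: "nat \<Rightarrow> int fps" where "DD L = (\<Prod>k\<in>{1..L}. 1 + fps_X^(2*(2*k-1)))"
definition EE :: "nat \<Rightarrow> int fps poly" where "EE L = (\<Prod>k\<in>{1..L}. [:1, Xs (2*k-1):])"

lemma B_split: "B L = smult (DD L) (EE L)"
proof (induction L)
  case 0 then show ?case by (simp add: B_def DD_def EE_def)
next
  case (Suc L)
  have "B (Suc L) = fac (2*L+1) * B L" by (rule B_Suc)
  also have "\<dots> = smult (1 + fps_X^(2*(2*L+1))) [:1, Xs (2*L+1):] * smult (DD L) (EE L)"
    using fac_split[of "2*L+1"] Suc by simp
  also have "\<dots> = smult ((1 + fps_X^(2*(2*L+1))) * DD L) ([:1, Xs (2*L+1):] * EE L)"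
    by (simp add: mult_smult_left mult_smult_right smult_add_right mult_ac)
  also have "(1 + fps_X^(2*(2*L+1))) * DD L = DD (Suc L)"
    by (simp add: DD_def prod.nat_ivl_Suc')
  also have "[:1, Xs (2*L+1):] * EE L = EE (Suc L)"
    by (simp add: EE_def prod.nat_ivl_Suc')
  finally show ?case .
qed

lemma EE_coeff0: "coeff (EE L) 0 = 1"
  by (induction L) (auto simp: EE_def prod.nat_ivl_Suc' coeff_mult_0)

lemma jtp_coeff:
  "2 * DD L * coeff (EE L) t = (\<Sum>j\<in>{-int L..int L}. aa L j * fps_const (c (nat \<bar>j\<bar>) t))"
proof -
  have "coeff (2 * B L) t = (\<Sum>j\<in>{-int L..int L}. aa L j * fps_const (c (nat \<bar>j\<bar>) t))"
    unfolding jtp by (simp add: coeff_sum coeff_V)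
  moreover have "coeff (2 * B L) t = 2 * DD L * coeff (EE L) t"
    by (simp add: B_split numeral_poly mult.assoc)
  ultimately show ?thesis by simp
qed



definition Xt :: "nat \<Rightarrow> nat \<Rightarrow> int fps" where
  "Xt s n = (\<Sum>m\<in>{..n}. fps_const (cheb 0 m) * fps_X^(s*(m+1)))"

lemma Xt_cong:
  assumes s: "0 < s"
  shows "eqK (n+1) (Xs s) (Xt s n)"
  unfolding eqK_def
proof (intro allI impI)
  fix k assume k: "k < n+1"
  have r: "Xt s n $ k = (\<Sum>m\<in>{..n}. if k = s*(m+1) then cheb 0 m else 0)"
    unfolding Xt_def fps_sum_nth by (intro sum.cong) auto
  show "Xs s $ k = Xt s n $ k"
  proof (cases "s dvd k \<and> s \<le> k")
    case True
    then obtain m0 where m0: "k = s * (m0+1)"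
      by (metis dvd_def Suc_eq_plus1 mult_0_right not0_implies_Suc le_zero_eq s not_less_zero)
    have kd: "k div s - 1 = m0" using m0 s by simp
    have "m0 + 1 \<le> s * (m0 + 1)" using s by (cases s) auto
    then have "m0 + 1 \<le> k" using m0 by simp
    then have m0n: "m0 \<in> {..n}" using k by simp
    have "(\<Sum>m\<in>{..n}. if k = s*(m+1) then cheb 0 m else 0) = (\<Sum>m\<in>{..n}. if m = m0 then cheb 0 m else 0)"
      using m0 s by (intro sum.cong) auto
    also have "\<dots> = cheb 0 m0" using m0n by simp
    finally show ?thesis using r True kd by (simp add: Xs_def)
  next
    case False
    have "(\<Sum>m\<in>{..n}. if k = s*(m+1) then cheb 0 m else 0) = 0"
      using False by (intro sum.neutral) auto
    moreover have "Xs s $ k = 0" unfolding Xs_def fps_nth_Abs_fps by (rule if_not_P[OF False])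
    ultimately show ?thesis using r by simp
  qed
qed

lemma fps_const_prod: "finite S \<Longrightarrow> fps_const (\<Prod>s\<in>S. f s) = (\<Prod>s\<in>S. fps_const (f s))"
  by (induction S rule: finite_induct) (auto simp: fps_const_mult[symmetric])

lemma PX:
  assumes fin: "finite S" and nz: "0 \<notin> S"
  shows "(\<Prod>s\<in>S. Xs s) $ n = (\<Sum>f\<in>{f \<in> S \<rightarrow>\<^sub>E {..n}. (\<Sum>s\<in>S. s * (f s + 1)) = n}. \<Prod>s\<in>S. cheb 0 (f s))"
proof -
  have "eqK (n+1) (\<Prod>s\<in>S. Xs s) (\<Prod>s\<in>S. Xt s n)"
    using fin nz by (intro eqK_prod Xt_cong) (auto intro!: Nat.gr0I)
  then have "(\<Prod>s\<in>S. Xs s) $ n = (\<Prod>s\<in>S. Xt s n) $ n" by (simp add: eqK_def)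
  also have "(\<Prod>s\<in>S. Xt s n) = (\<Sum>f\<in>S \<rightarrow>\<^sub>E {..n}. \<Prod>s\<in>S. fps_const (cheb 0 (f s)) * fps_X^(s*(f s+1)))"
    unfolding Xt_def by (rule prod_sum_PiE) (use fin in auto)
  also have "\<dots> = (\<Sum>f\<in>S \<rightarrow>\<^sub>E {..n}. fps_const (\<Prod>s\<in>S. cheb 0 (f s)) * fps_X^(\<Sum>s\<in>S. s*(f s+1)))"
    by (intro sum.cong refl) (simp add: prod.distrib fps_const_prod[OF fin] power_sum)
  also have "\<dots> $ n = (\<Sum>f\<in>S \<rightarrow>\<^sub>E {..n}. if (\<Sum>s\<in>S. s * (f s + 1)) = n then (\<Prod>s\<in>S. cheb 0 (f s)) else 0)"
    unfolding fps_sum_nth by (intro sum.cong refl) (auto simp: eq_commute)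
  also have "\<dots> = (\<Sum>f\<in>{f \<in> S \<rightarrow>\<^sub>E {..n}. (\<Sum>s\<in>S. s * (f s + 1)) = n}. \<Prod>s\<in>S. cheb 0 (f s))"
    by (rule sum.inter_filter[symmetric]) (use fin in \<open>auto intro: finite_PiE\<close>)
  finally show ?thesis .
qed

lemma prod_monom1: "finite S \<Longrightarrow> (\<Prod>s\<in>S. monom (f s) 1) = monom (\<Prod>s\<in>S. f s) (card S)"
  by (induction S rule: finite_induct) (auto simp: mult_monom)

lemma prod_lin_coeff:
  assumes "finite A"
  shows "coeff (\<Prod>s\<in>A. [:1, f s:]) t = (\<Sum>S\<in>{S. S \<subseteq> A \<and> card S = t}. \<Prod>s\<in>S. f s)"
proof -
  have "(\<Prod>s\<in>A. [:1, f s:]) = (\<Prod>s\<in>A. monom (f s) 1 + 1)"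
    by (intro prod.cong refl) (simp add: monom_altdef one_pCons)
  also have "\<dots> = (\<Sum>S\<in>Pow A. (\<Prod>s\<in>S. monom (f s) 1) * (\<Prod>s\<in>A-S. 1))"
    by (rule prod_add[OF assms])
  also have "\<dots> = (\<Sum>S\<in>Pow A. monom (\<Prod>s\<in>S. f s) (card S))"
  proof (intro sum.cong refl)
    fix S assume "S \<in> Pow A"
    then have "finite S" using assms finite_subset by blast
    then show "(\<Prod>s\<in>S. monom (f s) 1) * (\<Prod>s\<in>A-S. 1) = monom (\<Prod>s\<in>S. f s) (card S)"
      using prod_monom1[OF \<open>finite S\<close>, of f] by simp
  qed
  finally have "coeff (\<Prod>s\<in>A. [:1, f s:]) t = (\<Sum>S\<in>Pow A. if card S = t then (\<Prod>s\<in>S. f s) else 0)"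
    by (simp add: coeff_sum coeff_monom eq_commute)
  also have "\<dots> = (\<Sum>S\<in>{S \<in> Pow A. card S = t}. \<Prod>s\<in>S. f s)"
    by (rule sum.inter_filter[symmetric]) (use assms in auto)
  also have "{S \<in> Pow A. card S = t} = {S. S \<subseteq> A \<and> card S = t}" by auto
  finally show ?thesis .
qed

lemma EE_odd: "EE L = (\<Prod>s\<in>{s. odd s \<and> s < 2*L}. [:1, Xs s:])"
proof -
  have "(\<lambda>k. 2*k-1) ` {1..L} = {s. odd s \<and> s < 2*L}"
  proof
    show "(\<lambda>k. 2*k-1) ` {1..L} \<subseteq> {s. odd s \<and> s < 2*L}" by auto
    show "{s. odd s \<and> s < 2*L} \<subseteq> (\<lambda>k. 2*k-1) ` {1..L}"
    proof
      fix s assume "s \<in> {s. odd s \<and> s < 2*L}"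
      then obtain k where "s = 2*k+1" "2*k+1 < 2*L" by (auto elim: oddE)
      then show "s \<in> (\<lambda>k. 2*k-1) ` {1..L}" by (intro image_eqI[of _ _ "k+1"]) auto
    qed
  qed
  moreover have "inj_on (\<lambda>k. 2*k-1) {1..L}" by (auto simp: inj_on_def)
  then have "(\<Prod>s\<in>(\<lambda>k. 2*k-1) ` {1..L}. [:1, Xs s:]) = (\<Prod>k\<in>{1..L}. [:1, Xs (2*k-1):])"
    by (simp add: prod.reindex)
  ultimately show ?thesis unfolding EE_def by simp
qed

lemma EE_m_odd:
  assumes n: "n < 2*L"
  shows "coeff (EE L) t $ n = m_odd 0 t n"
proof -
  define A where "A = {s. odd s \<and> s < 2*L}"
  have finA: "finite A" unfolding A_def by auto
  have "coeff (EE L) t $ n = (\<Sum>S\<in>{S. S \<subseteq> A \<and> card S = t}. (\<Prod>s\<in>S. Xs s) $ n)"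
    unfolding EE_odd A_def[symmetric] prod_lin_coeff[OF finA] by (simp add: fps_sum_nth)
  also have "\<dots> = (\<Sum>S\<in>{S. S \<subseteq> A \<and> card S = t}.
      \<Sum>f\<in>{f \<in> S \<rightarrow>\<^sub>E {..n}. (\<Sum>s\<in>S. s * (f s + 1)) = n}. \<Prod>s\<in>S. cheb 0 (f s))"
  proof (intro sum.cong refl PX)
    fix S assume "S \<in> {S. S \<subseteq> A \<and> card S = t}"
    then have "S \<subseteq> A" by auto
    then show "finite S" using finite_subset finA by blast
    show "0 \<notin> S" using \<open>S \<subseteq> A\<close> unfolding A_def by auto
  qed
  also have "\<dots> = (\<Sum>S\<in>{S. S \<subseteq> {k. odd k \<and> k \<le> n} \<and> card S = t}.
      \<Sum>f\<in>{f \<in> S \<rightarrow>\<^sub>E {..n}. (\<Sum>s\<in>S. s * (f s + 1)) = n}. \<Prod>s\<in>S. cheb 0 (f s))"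
  proof (rule sum.mono_neutral_right)
    show "finite {S. S \<subseteq> A \<and> card S = t}" using finA by auto
    show "{S. S \<subseteq> {k. odd k \<and> k \<le> n} \<and> card S = t} \<subseteq> {S. S \<subseteq> A \<and> card S = t}"
      using n unfolding A_def by auto
    show "\<forall>S\<in>{S. S \<subseteq> A \<and> card S = t} - {S. S \<subseteq> {k. odd k \<and> k \<le> n} \<and> card S = t}.
        (\<Sum>f\<in>{f \<in> S \<rightarrow>\<^sub>E {..n}. (\<Sum>s\<in>S. s * (f s + 1)) = n}. \<Prod>s\<in>S. cheb 0 (f s)) = 0"
    proof
      fix S assume S: "S \<in> {S. S \<subseteq> A \<and> card S = t} - {S. S \<subseteq> {k. odd k \<and> k \<le> n} \<and> card S = t}"
      have SA: "S \<subseteq> A" and nS: "\<not> S \<subseteq> {k. odd k \<and> k \<le> n}" using S by auto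
      then obtain s0 where s0': "s0 \<in> S" "\<not> (odd s0 \<and> s0 \<le> n)" by auto
      then have s0: "s0 \<in> S" "n < s0" using SA unfolding A_def by auto
      have finS: "finite S" using S finA finite_subset by auto
      have E: "{f \<in> S \<rightarrow>\<^sub>E {..n}. (\<Sum>s\<in>S. s * (f s + 1)) = n} = {}"
      proof (rule ccontr)
        assume "\<not> ?thesis"
        then obtain f where f: "(\<Sum>s\<in>S. s * (f s + 1)) = n" by auto
        have "s0 * (f s0 + 1) \<le> (\<Sum>s\<in>S. s * (f s + 1))"
          by (rule member_le_sum) (use s0 finS in auto)
        moreover have "s0 \<le> s0 * (f s0 + 1)" by simp
        ultimately show False using f s0 by linarith
      qed
      show "(\<Sum>f\<in>{f \<in> S \<rightarrow>\<^sub>E {..n}. (\<Sum>s\<in>S. s * (f s + 1)) = n}. \<Prod>s\<in>S. cheb 0 (f s)) = 0"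
        by (simp only: E sum.empty)
    qed
  qed
  also have "\<dots> = m_odd 0 t n" by (simp add: m_odd_def)
  finally show ?thesis .
qed



definition Mf :: "nat \<Rightarrow> int fps" where "Mf t = Abs_fps (\<lambda>n. m_odd 0 t n)"
definition Hs :: "nat \<Rightarrow> int fps" where
  "Hs t = Abs_fps (\<lambda>n. \<Sum>m\<in>{1..n}. if m*m = n then c m t else 0)"
definition Th :: "int fps" where "Th = 1 + Hs 0"

lemma sum_sym_int:
  fixes f :: "int \<Rightarrow> 'a::comm_monoid_add"
  shows "(\<Sum>j\<in>{-int L..int L}. f j) = f 0 + (\<Sum>m\<in>{1..L}. f (int m) + f (- int m))"
proof (induction L)
  case 0 then show ?case by simp
next
  case (Suc L)
  have "{-int (Suc L)..int (Suc L)} = insert (int (Suc L)) (insert (- int (Suc L)) {-int L..int L})" by auto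
  then have "(\<Sum>j\<in>{-int (Suc L)..int (Suc L)}. f j) = f (int (Suc L)) + f (- int (Suc L)) + (\<Sum>j\<in>{-int L..int L}. f j)"
    by (simp add: add.assoc)
  then show ?case using Suc by (simp add: sum.atLeast_Suc_atMost_Suc_shift sum.nat_ivl_Suc' add_ac)
qed

lemma T_coeff:
  assumes k: "k < L"
  shows "(\<Sum>j\<in>{-int L..int L}. fps_X^(nat (j*j)) * fps_const (c (nat \<bar>j\<bar>) t)) $ k
       = (if k = 0 then c 0 t else 0) + 2 * (\<Sum>m\<in>{1..k}. if m*m = k then c m t else 0)"
proof -
  have "(\<Sum>j\<in>{-int L..int L}. fps_X^(nat (j*j)) * fps_const (c (nat \<bar>j\<bar>) t)) $ k
      = (\<Sum>j\<in>{-int L..int L}. if k = nat (j*j) then c (nat \<bar>j\<bar>) t else 0)"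
    unfolding fps_sum_nth by (intro sum.cong refl) (simp add: fps_X_power_mult_right_nth mult.commute)
  also have "\<dots> = (if k = 0 then c 0 t else 0) + (\<Sum>m\<in>{1..L}. 2 * (if m*m = k then c m t else 0))"
    unfolding sum_sym_int
  proof (intro arg_cong2[where f="(+)"] sum.cong refl)
    fix m assume "m \<in> {1..L}"
    have "nat (int m * int m) = m*m" "nat (- int m * - int m) = m*m" by (simp_all add: nat_mult_distrib)
    then show "(if k = nat (int m * int m) then c (nat \<bar>int m\<bar>) t else 0) +
        (if k = nat (- int m * - int m) then c (nat \<bar>- int m\<bar>) t else 0) = 2 * (if m*m = k then c m t else 0)"
      by auto
  qed simp
  also have "(\<Sum>m\<in>{1..L}. 2 * (if m*m = k then c m t else 0)) = 2 * (\<Sum>m\<in>{1..k}. if m*m = k then c m t else 0)"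
  proof -
    have "(\<Sum>m\<in>{1..L}. (if m*m = k then c m t else 0)) = (\<Sum>m\<in>{1..k}. if m*m = k then c m t else 0)"
    proof (rule sum.mono_neutral_right)
      show "{1..k} \<subseteq> {1..L}" using k by auto
      show "\<forall>i\<in>{1..L} - {1..k}. (if i*i = k then c i t else 0) = 0"
      proof
        fix i assume "i \<in> {1..L} - {1..k}"
        then have "k < i" "1 \<le> i" by auto
        then have "k < i*i" by (metis less_le_trans mult_le_mono1 nat_mult_1)
        then show "(if i*i = k then c i t else 0) = 0" by simp
      qed
    qed simp
    moreover have "(\<Sum>m\<in>{1..L}. 2 * (if m*m = k then c m t else 0)) = 2 * (\<Sum>m\<in>{1..L}. (if m*m = k then c m t else 0))"
      by (simp add: sum_distrib_left)
    ultimately show ?thesis by simp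
  qed
  finally show ?thesis .
qed

lemma c0t: "1 \<le> t \<Longrightarrow> c 0 t = 0" by simp

lemma T_cong_Hs:
  assumes "K \<le> L" "1 \<le> t"
  shows "eqK K (\<Sum>j\<in>{-int L..int L}. fps_X^(nat (j*j)) * fps_const (c (nat \<bar>j\<bar>) t)) (2 * Hs t)"
  unfolding eqK_def
proof (intro allI impI)
  fix k assume "k < K"
  then have "k < L" using assms by simp
  then show "(\<Sum>j\<in>{-int L..int L}. fps_X^(nat (j*j)) * fps_const (c (nat \<bar>j\<bar>) t)) $ k = (2 * Hs t) $ k"
    unfolding T_coeff[OF \<open>k < L\<close>] using assms by (simp add: Hs_def numeral_fps_const)
qed

lemma T_cong_Th:
  assumes "K \<le> L"
  shows "eqK K (\<Sum>j\<in>{-int L..int L}. fps_X^(nat (j*j)) * fps_const (c (nat \<bar>j\<bar>) 0)) (2 * Th)"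
  unfolding eqK_def
proof (intro allI impI)
  fix k assume "k < K"
  then have "k < L" using assms by simp
  show "(\<Sum>j\<in>{-int L..int L}. fps_X^(nat (j*j)) * fps_const (c (nat \<bar>j\<bar>) 0)) $ k = (2 * Th) $ k"
    unfolding T_coeff[OF \<open>k < L\<close>]
    by (cases "k = 0") (simp_all add: Th_def Hs_def numeral_fps_const)
qed

lemma S_cong:
  assumes "K \<le> 2*L+1"
  shows "eqK K (\<Sum>j\<in>{-int L..int L}. aa L j * fps_const (c (nat \<bar>j\<bar>) t))
                (gb (2*L) L * (\<Sum>j\<in>{-int L..int L}. fps_X^(nat (j*j)) * fps_const (c (nat \<bar>j\<bar>) t)))"
  unfolding sum_distrib_left
proof (rule eqK_sum)
  fix j assume j: "j \<in> {-int L..int L}"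
  define m where "m = nat \<bar>j\<bar>"
  define k where "k = nat (int L + j)"
  have mL: "m \<le> L" "k \<le> 2*L" "L - m \<le> k" "k \<le> L + m" using j by (auto simp: m_def k_def)
  have jj: "nat (j*j) = m*m" by (simp add: m_def nat_mult_distrib[symmetric] abs_mult_self_eq)
  have jL: "\<bar>j\<bar> \<le> int L" using j by auto
  have aj: "aa L j = fps_X^(m*m) * gb (2*L) k" using jL by (simp add: aa_def jj k_def)
  have "eqK (2*(L-m+1) + m*m) (fps_X^(m*m) * gb (2*L) k) (fps_X^(m*m) * gb (2*L) L)"
    by (rule eqK_Xpow, rule gb_cong) (use mL in auto)
  moreover have "K \<le> 2*(L-m+1) + m*m"
  proof -
    have "2*m \<le> m*m + 1"
    proof (cases m)
      case 0 then show ?thesis by simp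
    next
      case (Suc m') then show ?thesis by (simp add: algebra_simps)
    qed
    moreover have "(L - m) + m = L" using mL by simp
    ultimately show ?thesis using assms by arith
  qed
  ultimately have "eqK K (aa L j) (fps_X^(m*m) * gb (2*L) L)" unfolding aj by (rule eqK_mono)
  then show "eqK K (aa L j * fps_const (c (nat \<bar>j\<bar>) t))
         (gb (2*L) L * (fps_X^(nat (j*j)) * fps_const (c (nat \<bar>j\<bar>) t)))"
    unfolding jj by (metis eqK_mult_right mult.assoc mult.commute)
qed

theorem identA:
  assumes t: "1 \<le> t"
  shows "Th * Mf t = Hs t"
proof (rule fps_ext)
  fix n :: nat
  define L where "L = n + 1"
  define K where "K = n + 1"
  define e where "e = coeff (EE L) t"
  define G where "G = gb (2*L) L"
  define T where "T = (\<lambda>t. \<Sum>j\<in>{-int L..int L}. fps_X^(nat (j*j)) * fps_const (c (nat \<bar>j\<bar>) t))"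
  have KL: "K \<le> L" "K \<le> 2*L+1" by (simp_all add: K_def L_def)
  have e1: "2 * DD L * e = (\<Sum>j\<in>{-int L..int L}. aa L j * fps_const (c (nat \<bar>j\<bar>) t))"
    unfolding e_def by (rule jtp_coeff)
  have e0: "2 * DD L = (\<Sum>j\<in>{-int L..int L}. aa L j * fps_const (c (nat \<bar>j\<bar>) 0))"
    using jtp_coeff[of L 0] by (simp add: EE_coeff0)
  have c1: "eqK K (2 * DD L * e) (G * (2 * Hs t))"
    unfolding e1 G_def using S_cong[OF KL(2), of t] T_cong_Hs[OF KL(1) t]
    by (meson eqK_mult_left eqK_trans)
  have c0: "eqK K (2 * DD L) (G * (2 * Th))"
    unfolding e0 G_def using S_cong[OF KL(2), of 0] T_cong_Th[OF KL(1)]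
    by (meson eqK_mult_left eqK_trans)
  have "eqK K ((2 * (Th * e)) * G) ((2 * Hs t) * G)"
  proof -
    have "eqK K (2 * DD L * e) (G * (2 * Th) * e)" using c0 by (rule eqK_mult_right)
    then have "eqK K (G * (2 * Th) * e) (G * (2 * Hs t))" using c1 by (meson eqK_sym eqK_trans)
    then show ?thesis by (simp add: mult_ac)
  qed
  then have "eqK K (2 * (Th * e)) (2 * Hs t)"
    by (rule eqK_cancel[rotated]) (simp add: G_def gb_nth0)
  then have h1: "eqK K (Th * e) (Hs t)" by (rule eqK_cancel2)
  have h2: "eqK K e (Mf t)"
    unfolding eqK_def e_def Mf_def using EE_m_odd by (simp add: K_def L_def)
  have "eqK K (Th * Mf t) (Hs t)"
    using eqK_mult_left[OF h2, of Th] h1 by (meson eqK_sym eqK_trans)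
  then show "(Th * Mf t) $ n = Hs t $ n" by (simp add: eqK_def K_def)
qed



lemma c_lt: "j < t \<Longrightarrow> c j t = 0"
proof (induction j t rule: c.induct)
  case (3 j t) then show ?case by (cases t) auto
qed auto

lemma c_par: "odd (j + t) \<Longrightarrow> c j t = 0"
proof (induction j t rule: c.induct)
  case (3 j t) then show ?case by (cases t) auto
qed (auto intro: odd_pos)

lemma c_diag: "c t t = (if t = 0 then 2 else 1)"
proof (induction t rule: nat_less_induct)
  case (1 t)
  show ?case
  proof (cases t)
    case 0 then show ?thesis by simp
  next
    case (Suc t')
    show ?thesis
    proof (cases t')
      case 0 then show ?thesis using Suc by simp
    next
      case (Suc t'')
      have "c t t = c (Suc t'') (Suc t'') - c t'' (Suc (Suc t''))"
        using \<open>t = Suc t'\<close> Suc by simp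
      also have "c (Suc t'') (Suc t'') = 1" using 1 \<open>t = Suc t'\<close> Suc by simp
      also have "c t'' (Suc (Suc t'')) = 0" by (rule c_lt) simp
      finally show ?thesis using \<open>t = Suc t'\<close> by simp
    qed
  qed
qed

lemma c_even0: "c (2*b) 0 = 2 * (-1)^b"
proof (induction b)
  case 0 then show ?case by simp
next
  case (Suc b)
  have "c (2 * Suc b) 0 = c (Suc (Suc (2*b))) 0" by simp
  also have "\<dots> = - c (2*b) 0" by simp
  finally show ?case using Suc by simp
qed

lemma c_main_all: "\<forall>b. c (t + 2*(b+1)) t = (-1)^(b+1) * (int ((t+b+1) choose (b+1)) + int ((t+b) choose b))"
proof (induction t)
  case 0
  show ?case
  proof
    fix b
    have "c (2*(b+1)) 0 = 2 * (-1)^(b+1)" by (rule c_even0)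
    then show "c (0 + 2*(b+1)) 0 = (-1)^(b+1) * (int ((0+b+1) choose (b+1)) + int ((0+b) choose b))" by simp
  qed
next
  case (Suc t')
  have IH: "\<And>b. c (t' + 2*(b+1)) t' = (-1)^(b+1) * (int ((t'+b+1) choose (b+1)) + int ((t'+b) choose b))"
    using Suc.IH by blast
  show ?case
  proof
  fix b
  show "c (Suc t' + 2*(b+1)) (Suc t') = (-1)^(b+1) * (int ((Suc t'+b+1) choose (b+1)) + int ((Suc t'+b) choose b))"
  proof (induction b)
    case 0
    have "c (Suc t' + 2*(0+1)) (Suc t') = c (Suc (Suc t')) t' - c (Suc t') (Suc t')"
      by (simp add: numeral_2_eq_2)
    also have "c (Suc (Suc t')) t' = c (t' + 2*(0+1)) t'" by (simp add: numeral_2_eq_2)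
    also have "\<dots> = - (int ((t'+1) choose 1) + 1)" using IH[of 0] by simp
    also have "c (Suc t') (Suc t') = 1" by (simp add: c_diag)
    finally show ?case by simp
  next
    case (Suc b)
    have "c (Suc t' + 2*(Suc b+1)) (Suc t') = c (t' + 2*(Suc b + 1)) t' - c (Suc t' + 2*(b+1)) (Suc t')"
    proof -
      have "Suc t' + 2*(Suc b+1) = Suc (Suc (Suc t' + 2*(b+1)))" by simp
      moreover have "Suc (Suc t' + 2*(b+1)) = t' + 2*(Suc b + 1)" by simp
      ultimately show ?thesis by simp
    qed
    also have "c (t' + 2*(Suc b + 1)) t' = (-1)^(b+2) * (int ((t'+b+2) choose (b+2)) + int ((t'+b+1) choose (b+1)))"
      using IH[of "Suc b"] by (simp add: add_ac)
    also have "c (Suc t' + 2*(b+1)) (Suc t') = (-1)^(b+1) * (int ((t'+b+2) choose (b+1)) + int ((t'+b+1) choose b))"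
      using Suc.IH by (simp del: c.simps binomial_Suc_Suc add: add_ac)
    also have "(-1)^(b+2) * (int ((t'+b+2) choose (b+2)) + int ((t'+b+1) choose (b+1)))
        - (-1)^(b+1) * (int ((t'+b+2) choose (b+1)) + int ((t'+b+1) choose b))
        = (-1)^(Suc b+1) * (int ((Suc t'+Suc b+1) choose (Suc b+1)) + int ((Suc t'+Suc b) choose (Suc b)))"
    proof -
      have p1: "(t'+b+3) choose (b+2) = ((t'+b+2) choose (b+2)) + ((t'+b+2) choose (b+1))"
        using binomial_Suc_Suc[of "t'+b+2" "b+1"] by (simp del: binomial_Suc_Suc add: add_ac numeral_3_eq_3 numeral_2_eq_2)
      have p2: "(t'+b+2) choose (b+1) = ((t'+b+1) choose (b+1)) + ((t'+b+1) choose b)"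
        using binomial_Suc_Suc[of "t'+b+1" "b"] by (simp del: binomial_Suc_Suc add: add_ac numeral_3_eq_3 numeral_2_eq_2)
      have q: "Suc t'+Suc b+1 = t'+b+3" "Suc b + 1 = b+2" "Suc t'+Suc b = t'+b+2" by simp_all
      show ?thesis unfolding q by (simp add: algebra_simps numeral_3_eq_3 numeral_2_eq_2)
    qed
    finally show ?case .
  qed
  qed
qed

lemma c_main: "c (t + 2*(b+1)) t = (-1)^(b+1) * (int ((t+b+1) choose (b+1)) + int ((t+b) choose b))"
  using c_main_all by blast


lemma two_adic:
  fixes b X :: int
  assumes "2^E dvd b * X" "\<not> 2^(d+1) dvd b" "d \<le> E"
  shows "2^(E-d) dvd X"
  using assms
proof (induction d arbitrary: E b)
  case 0
  then have "coprime (2^E) b" by (simp add: coprime_commute)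
  then show ?case using 0 by (simp add: coprime_dvd_mult_right_iff)
next
  case (Suc d)
  show ?case
  proof (cases "2 dvd b")
    case False
    then have "coprime (2^E) b" by (simp add: coprime_commute)
    then have "2^E dvd X" using Suc.prems by (simp add: coprime_dvd_mult_right_iff)
    then show ?thesis by (rule dvd_trans[rotated]) (simp add: le_imp_power_dvd)
  next
    case True
    then obtain b' where b: "b = 2 * b'" by auto
    obtain E' where E: "E = Suc E'" using Suc.prems by (cases E) auto
    have "2 * 2^E' dvd 2 * (b' * X)" using Suc.prems(1) b E by (simp add: mult.assoc)
    then have "2^E' dvd b' * X" by simp
    moreover have "\<not> 2^(d+1) dvd b'" using Suc.prems(2) b by auto
    ultimately have "2^(E'-d) dvd X" using Suc.IH[of E' b'] Suc.prems E by simp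
    then show ?thesis using E by simp
  qed
qed

lemma mod_add_dvd: "(M::nat) dvd x \<Longrightarrow> (t + x) mod M = t mod M"
proof -
  assume "M dvd x"
  then have "x mod M = 0" by simp
  then have "(t + x mod M) mod M = t mod M" by simp
  then show ?thesis by (simp add: mod_add_right_eq)
qed

lemma binom_abs: "int (Suc b) * int ((t + Suc b) choose Suc b) = int (t+1) * int ((t + Suc b) choose b)"
proof -
  have "Suc b * (Suc (b + t) choose Suc b) = Suc t * (Suc (b + t) choose b)"
    by (rule Suc_times_binomial_add)
  then show ?thesis by (metis of_nat_mult add.commute add_Suc_right Suc_eq_plus1)
qed

lemma cdiv:
  assumes e: "2^e dvd (t+1)" and k: "k \<le> e" and t: "1 \<le> t"
    and n1: "m mod 2^(e-k+2) \<noteq> t mod 2^(e-k+2)" and n2: "m mod 2^(e-k+2) \<noteq> (t+2) mod 2^(e-k+2)"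
  shows "(2::int)^k dvd c m t"
proof (cases "m < t \<or> odd (m + t)")
  case True
  then show ?thesis using c_lt c_par by auto
next
  case False
  then have "even (m - t)" "t \<le> m" by auto
  from \<open>even (m - t)\<close> obtain b where "m - t = 2*b" by (rule evenE)
  then have mb: "m = t + 2*b" using \<open>t \<le> m\<close> by simp
  have b1: "b \<noteq> 0"
  proof
    assume "b = 0" then show False using mb n1 by simp
  qed
  obtain b' where bb: "b = b' + 1" using b1 by (cases b) auto
  have cm: "c m t = (-1)^(b'+1) * (int ((t+b'+1) choose (b'+1)) + int ((t+b') choose b'))"
    using c_main[of t b'] mb bb by simp
  have e': "(2::int)^e dvd int (t+1)" using e by (metis of_nat_dvd_iff of_nat_numeral of_nat_power)
  have d1: "(2::int)^k dvd int ((t+b'+1) choose (b'+1))"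
  proof -
    have "int (b'+1) * int ((t+(b'+1)) choose (b'+1)) = int (t+1) * int ((t+(b'+1)) choose b')"
      using binom_abs[of b' t] by simp
    then have "(2::int)^e dvd int (b'+1) * int ((t+b'+1) choose (b'+1))"
      using e' by (simp add: add.assoc)
    moreover have "\<not> (2::int)^(e-k+1) dvd int (b'+1)"
    proof
      assume "(2::int)^(e-k+1) dvd int (b'+1)"
      then have "(2::nat)^(e-k+1) dvd b" using bb by (metis of_nat_dvd_iff of_nat_numeral of_nat_power)
      then have "2 * 2^(e-k+1) dvd 2 * b" by simp
      then have "2^(e-k+2) dvd 2*b" by simp
      then have "(t + 2*b) mod 2^(e-k+2) = t mod 2^(e-k+2)" by (rule mod_add_dvd)
      then show False using n1 mb by simp
    qed
    ultimately have "2^(e-(e-k)) dvd int ((t+b'+1) choose (b'+1))"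
      by (intro two_adic[of e]) (use k in auto)
    then show ?thesis using k by simp
  qed
  have d2: "(2::int)^k dvd int ((t+b') choose b')"
  proof (cases b')
    case 0
    then have "m = t + 2" using mb bb by simp
    then show ?thesis using n2 by simp
  next
    case (Suc b'')
    have "int b' * int ((t+b') choose b') = int (t+1) * int ((t+b') choose (b'-1))"
      using binom_abs[of b'' t] Suc by simp
    then have "(2::int)^e dvd int b' * int ((t+b') choose b')"
      using e' by simp
    moreover have "\<not> (2::int)^(e-k+1) dvd int b'"
    proof
      assume "(2::int)^(e-k+1) dvd int b'"
      then have "(2::nat)^(e-k+1) dvd b'" by (metis of_nat_dvd_iff of_nat_numeral of_nat_power)
      then have "2 * 2^(e-k+1) dvd 2 * b'" by simp
      then have "2^(e-k+2) dvd 2*b'" by simp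
      then have "((t+2) + 2*b') mod 2^(e-k+2) = (t+2) mod 2^(e-k+2)" by (rule mod_add_dvd)
      moreover have "m = (t+2) + 2*b'" using mb bb by simp
      ultimately show False using n2 by simp
    qed
    ultimately have "2^(e-(e-k)) dvd int ((t+b') choose b')"
      by (intro two_adic[of e]) (use k in auto)
    then show ?thesis using k by simp
  qed
  show ?thesis unfolding cm by (rule dvd_mult) (rule dvd_add[OF d1 d2])
qed



definition A4 :: "int fps" where
  "A4 = Abs_fps (\<lambda>n. \<Sum>m\<in>{1..n}. if m*m = n \<and> even m then (-1)^(m div 2) else 0)"

lemma c_0: "c m 0 = (if even m then 2 * (-1)^(m div 2) else 0)"
proof (cases "even m")
  case True
  then obtain b where "m = 2*b" by (auto elim: evenE)
  then show ?thesis using c_even0[of b] by simp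
next
  case False
  then show ?thesis using c_par[of m 0] by simp
qed

lemma Th_A4: "Th = 1 + 2 * A4"
proof -
  have "Hs 0 = 2 * A4"
  proof (rule fps_ext)
    fix n
    show "Hs 0 $ n = (2 * A4) $ n"
      by (simp add: Hs_def A4_def c_0 numeral_fps_const sum_distrib_left if_distrib cong: if_cong)
        (intro sum.cong refl, auto)
  qed
  then show ?thesis by (simp add: Th_def)
qed

lemma A4_nz: "A4 $ n \<noteq> 0 \<Longrightarrow> \<exists>x. n = 4*(x*x)"
proof -
  assume "A4 $ n \<noteq> 0"
  then have "(\<Sum>m\<in>{1..n}. if m*m = n \<and> even m then ((-1)^(m div 2)::int) else 0) \<noteq> 0"
    by (simp add: A4_def)
  then obtain m where "m \<in> {1..n}" "(if m*m = n \<and> even m then ((-1)^(m div 2)::int) else 0) \<noteq> 0"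
    by (rule sum.not_neutral_contains_not_neutral)
  then have "m*m = n" "even m" by (auto split: if_splits)
  then obtain x where "m = 2*x" by (auto elim: evenE)
  then show ?thesis using \<open>m*m = n\<close> by (intro exI[of _ x]) simp
qed

lemma A4pow_nz: "(A4^i) $ n \<noteq> 0 \<Longrightarrow> \<exists>xs. length xs = i \<and> n = 4 * sum_list (map (\<lambda>x. x*x) xs)"
proof (induction i arbitrary: n)
  case 0
  then have "n = 0" by (cases n) auto
  then show ?case by simp
next
  case (Suc i)
  then have "(\<Sum>j=0..n. A4 $ j * (A4^i) $ (n - j)) \<noteq> 0" by (simp add: fps_mult_nth)
  then obtain j where j: "j \<in> {0..n}" "A4 $ j * (A4^i) $ (n - j) \<noteq> 0"
    by (rule sum.not_neutral_contains_not_neutral)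
  then have "A4 $ j \<noteq> 0" "(A4^i) $ (n - j) \<noteq> 0" by auto
  then obtain x xs where "j = 4*(x*x)" "length xs = i" "n - j = 4 * sum_list (map (\<lambda>x. x*x) xs)"
    using A4_nz Suc.IH by blast
  then show ?case using j(1) by (intro exI[of _ "x # xs"]) auto
qed

lemma sq_mod4: "(x*x) mod 4 \<in> {0,1::nat}"
proof -
  have "(x*x) mod 4 = ((x mod 4) * (x mod 4)) mod 4" by (simp add: mod_mult_eq)
  moreover have "x mod 4 \<in> {0,1,2,3}" by auto
  ultimately show ?thesis by auto
qed

lemma sq_mod8: "(x*x) mod 8 \<in> {0,1,4::nat}"
proof -
  have "(x*x) mod 8 = ((x mod 8) * (x mod 8)) mod 8" by (simp add: mod_mult_eq)
  moreover have "x mod 8 \<in> {0,1,2,3,4,5,6,7}" by auto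
  ultimately show ?thesis by auto
qed

lemma mod3: "((a::nat) + b + d) mod 8 = (a mod 8 + b mod 8 + d mod 8) mod 8"
proof -
  have "(a mod 8 + b mod 8 + d mod 8) mod 8 = ((a mod 8 + b mod 8) mod 8 + d mod 8) mod 8"
    by (rule mod_add_left_eq[symmetric])
  also have "(a mod 8 + b mod 8) mod 8 = (a + b) mod 8" by (rule mod_add_eq)
  also have "((a + b) mod 8 + d mod 8) mod 8 = (a + b + d) mod 8" by (rule mod_add_eq)
  finally show ?thesis by simp
qed

lemma A1_zero: "(b::nat) mod 16 = 8 \<or> b mod 16 = 12 \<Longrightarrow> (A4^1) $ b = 0"
proof (rule ccontr)
  assume b: "b mod 16 = 8 \<or> b mod 16 = 12" and "(A4^1) $ b \<noteq> 0"
  then obtain xs where "length xs = 1" "b = 4 * sum_list (map (\<lambda>x. x*x) xs)" using A4pow_nz by blast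
  then obtain x where "b = 4 * (x*x)" by (cases xs) auto
  then have "b mod 16 = 4 * ((x*x) mod 4)" using mult_mod_right[of 4 "x*x" 4] by simp
  moreover have "(x*x) mod 4 \<in> {0,1}" by (rule sq_mod4)
  ultimately show False using b by auto
qed

lemma A2_zero: "(b::nat) mod 16 = 12 \<Longrightarrow> (A4^2) $ b = 0"
proof (rule ccontr)
  assume b: "b mod 16 = 12" and "(A4^2) $ b \<noteq> 0"
  then obtain xs where "length xs = 2" "b = 4 * sum_list (map (\<lambda>x. x*x) xs)" using A4pow_nz by blast
  then obtain x y where "b = 4 * (x*x + y*y)"
    by (cases xs; cases "tl xs") auto
  then have "b mod 16 = 4 * ((x*x + y*y) mod 4)" using mult_mod_right[of 4 "x*x+y*y" 4] by simp
  moreover have "(x*x + y*y) mod 4 = ((x*x) mod 4 + (y*y) mod 4) mod 4" by (simp add: mod_add_eq)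
  moreover have "(x*x) mod 4 \<in> {0,1}" "(y*y) mod 4 \<in> {0,1}" by (rule sq_mod4)+
  ultimately show False using b by auto
qed

lemma A3_zero: "(b::nat) mod 32 = 28 \<Longrightarrow> (A4^3) $ b = 0"
proof (rule ccontr)
  assume b: "b mod 32 = 28" and "(A4^3) $ b \<noteq> 0"
  then obtain xs where "length xs = 3" "b = 4 * sum_list (map (\<lambda>x. x*x) xs)" using A4pow_nz by blast
  then obtain x y z where "b = 4 * (x*x + y*y + z*z)"
    by (cases xs; cases "tl xs"; cases "tl (tl xs)") (auto simp: add.assoc)
  then have "b mod 32 = 4 * ((x*x + y*y + z*z) mod 8)" using mult_mod_right[of 4 "x*x+y*y+z*z" 8] by simp
  moreover have "(x*x + y*y + z*z) mod 8 = ((x*x) mod 8 + (y*y) mod 8 + (z*z) mod 8) mod 8"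
    by (rule mod3)
  moreover have "(x*x) mod 8 \<in> {0,1,4}" "(y*y) mod 8 \<in> {0,1,4}" "(z*z) mod 8 \<in> {0,1,4}" by (rule sq_mod8)+
  ultimately show False using b by auto
qed

lemma sum_sym_even:
  fixes g :: "nat \<Rightarrow> int"
  assumes sym: "\<And>j. j \<le> b \<Longrightarrow> g j = g (b - j)" and mid: "\<And>j. 2*j = b \<Longrightarrow> even (g j)"
  shows "lo + hi = b \<Longrightarrow> even (\<Sum>j\<in>{lo..hi}. g j)"
proof (induction "hi - lo" arbitrary: lo hi rule: less_induct)
  case less
  consider "hi < lo" | "hi = lo" | "lo < hi" by linarith
  then show ?case
  proof cases
    case 1 then show ?thesis by simp
  next
    case 2 then show ?thesis using mid less.prems by simp
  next
    case 3
    then obtain h where h: "hi = Suc h" "lo \<le> h" by (cases hi) auto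
    have "(\<Sum>j\<in>{lo..hi}. g j) = g lo + (\<Sum>j\<in>{Suc lo..h}. g j) + g hi"
      using h by (simp add: sum.atLeast_Suc_atMost sum.cl_ivl_Suc)
    moreover have "even (\<Sum>j\<in>{Suc lo..h}. g j)"
      using less.hyps[of h "Suc lo"] h less.prems by simp
    moreover have "g hi = g lo"
    proof -
      have "b - lo = hi" "lo \<le> b" using less.prems by auto
      then show ?thesis using sym[of lo] by simp
    qed
    ultimately show ?thesis by simp
  qed
qed

lemma A4_4_even: "(b::nat) mod 8 = 4 \<Longrightarrow> even ((A4^4) $ b)"
proof -
  assume b: "b mod 8 = 4"
  define F where "F = A4^2"
  have F4: "\<And>j. F $ j \<noteq> 0 \<Longrightarrow> 4 dvd j"
    unfolding F_def using A4pow_nz by fastforce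
  have "(A4^4) $ b = (F * F) $ b" by (simp add: F_def power_add[symmetric])
  also have "\<dots> = (\<Sum>j\<in>{0..b}. F $ j * F $ (b - j))" by (simp add: fps_mult_nth)
  finally have e: "(A4^4) $ b = (\<Sum>j\<in>{0..b}. F $ j * F $ (b - j))" .
  have "even (\<Sum>j\<in>{0..b}. F $ j * F $ (b - j))"
  proof (rule sum_sym_even[of b])
    fix j assume "j \<le> b" then show "F $ j * F $ (b - j) = F $ (b - j) * F $ (b - (b - j))" by simp
  next
    fix j assume "2*j = b"
    then have "\<not> 4 dvd j" using b by (auto elim!: dvdE)
    then have "F $ j = 0" using F4 by blast
    then show "even (F $ j * F $ (b - j))" by simp
  qed simp
  then show ?thesis using e by simp
qed

lemma decomp:
  assumes t: "1 \<le> t"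
  shows "Mf t = Hs t * (\<Sum>i<k. (-2 * A4)^i) + (-2 * A4)^k * Mf t"
proof -
  have "1 - (-2 * A4)^k = (1 - (-2 * A4)) * (\<Sum>i<k. (-2 * A4)^i)" by (rule one_diff_power_eq)
  also have "1 - (-2 * A4) = Th" by (simp add: Th_A4)
  finally have g: "1 - (-2 * A4)^k = Th * (\<Sum>i<k. (-2 * A4)^i)" .
  have "Mf t = Mf t * (1 - (-2 * A4)^k) + (-2 * A4)^k * Mf t" by (simp add: algebra_simps)
  also have "Mf t * (1 - (-2 * A4)^k) = (Th * Mf t) * (\<Sum>i<k. (-2 * A4)^i)"
    unfolding g by (simp add: mult_ac)
  also have "Th * Mf t = Hs t" by (rule identA[OF t])
  finally show ?thesis .
qed

lemma pow_m2A: "(-2 * A4)^i = fps_const ((-2)^i) * A4^i"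
proof -
  have "-2 * A4 = fps_const (-2) * A4" by (simp add: numeral_fps_const)
  then show ?thesis by (simp add: power_mult_distrib)
qed

lemma main_crit:
  assumes t: "1 \<le> t"
    and H: "\<And>m. 1 \<le> m \<Longrightarrow> m*m \<le> N \<Longrightarrow>
          (2::int)^k dvd c m t \<or> (\<forall>i<k. (2::int)^k dvd (-2)^i * (A4^i) $ (N - m*m))"
  shows "(2::int)^k dvd m_odd 0 t N"
proof -
  define P where "P = (\<Sum>i<k. (-2 * A4)^i)"
  have "m_odd 0 t N = Mf t $ N" by (simp add: Mf_def)
  also have "\<dots> = (Hs t * P) $ N + ((-2 * A4)^k * Mf t) $ N"
  proof -
    have "Mf t $ N = (Hs t * P + (-2 * A4)^k * Mf t) $ N" using decomp[OF t, of k] unfolding P_def by simp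
    then show ?thesis by simp
  qed
  also have "((-2 * A4)^k * Mf t) $ N = (-2)^k * (A4^k * Mf t) $ N"
    by (subst pow_m2A) (simp add: mult.assoc)
  finally have e: "m_odd 0 t N = (Hs t * P) $ N + (-2)^k * (A4^k * Mf t) $ N" .
  have Pn: "\<And>b. P $ b = (\<Sum>i<k. (-2)^i * (A4^i) $ b)"
    by (simp only: P_def fps_sum_nth pow_m2A fps_mult_left_const_nth)
  have "(2::int)^k dvd (Hs t * P) $ N"
    unfolding fps_mult_nth
  proof (rule dvd_sum)
    fix a assume a: "a \<in> {0..N}"
    have "Hs t $ a * P $ (N - a) = (\<Sum>m\<in>{1..a}. if m*m = a then c m t * P $ (N - a) else 0)"
      by (simp add: Hs_def sum_distrib_right) (intro sum.cong refl, auto)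
    also have "(2::int)^k dvd \<dots>"
    proof (rule dvd_sum)
      fix m assume m: "m \<in> {1..a}"
      show "(2::int)^k dvd (if m*m = a then c m t * P $ (N - a) else 0)"
      proof (cases "m*m = a")
        case True
        then have "1 \<le> m" "m*m \<le> N" using m a by auto
        then consider "(2::int)^k dvd c m t" | "\<forall>i<k. (2::int)^k dvd (-2)^i * (A4^i) $ (N - m*m)"
          using H by blast
        then show ?thesis
        proof cases
          case 1 then show ?thesis using True by simp
        next
          case 2
          then have "(2::int)^k dvd P $ (N - a)" unfolding Pn using True by (intro dvd_sum) auto
          then show ?thesis using True by simp
        qed
      qed simp
    qed
    finally show "(2::int)^k dvd Hs t $ a * P $ (N - a)" .
  qed
  moreover have "(2::int)^k dvd (-2)^k * (A4^k * Mf t) $ N"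
    by (simp add: power_minus')
  ultimately show ?thesis unfolding e by simp
qed



lemma final_gen:
  assumes e: "2^e dvd (t+1)" and k: "k \<le> e" and t: "1 \<le> t"
    and Hb: "\<And>m. 1 \<le> m \<Longrightarrow> m*m \<le> N \<Longrightarrow>
      (m mod 2^(e-k+2) = t mod 2^(e-k+2) \<or> m mod 2^(e-k+2) = (t+2) mod 2^(e-k+2)) \<Longrightarrow>
      \<forall>i<k. (2::int)^k dvd (-2)^i * (A4^i) $ (N - m*m)"
  shows "(2::int)^k dvd m_odd 0 t N"
proof (rule main_crit[OF t])
  fix m assume m: "1 \<le> m" "m*m \<le> N"
  show "(2::int)^k dvd c m t \<or> (\<forall>i<k. (2::int)^k dvd (-2)^i * (A4^i) $ (N - m*m))"
  proof (cases "m mod 2^(e-k+2) = t mod 2^(e-k+2) \<or> m mod 2^(e-k+2) = (t+2) mod 2^(e-k+2)")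
    case True then show ?thesis using Hb m by blast
  next
    case False then show ?thesis using cdiv[OF e k t] by blast
  qed
qed

lemma sq16: "(m::nat) mod 8 = 1 \<or> m mod 8 = 7 \<Longrightarrow> (m*m) mod 16 = 1"
proof -
  assume h: "m mod 8 = 1 \<or> m mod 8 = 7"
  define q where "q = m div 8"
  have m: "m = 8*q + m mod 8" using div_mult_mod_eq[of m 8] by (simp add: q_def mult.commute)
  from h show ?thesis
  proof
    assume "m mod 8 = 1"
    then have m1: "m = 8*q + 1" using m by simp
    have eq: "m*m = 16*(4*q*q + q) + 1" unfolding m1 by (simp add: algebra_simps)
    have gen: "\<And>X::nat. (16*X + 1) mod 16 = 1" by simp
    show ?thesis using eq gen[of "4*q*q + q"] by (simp only:)
  next
    assume "m mod 8 = 7"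
    then have m1: "m = 8*q + 7" using m by simp
    have eq: "m*m = 16*(4*q*q + 7*q + 3) + 1" unfolding m1 by (simp add: algebra_simps)
    have gen: "\<And>X::nat. (16*X + 1) mod 16 = 1" by simp
    show ?thesis using eq gen[of "4*q*q + 7*q + 3"] by (simp only:)
  qed
qed

lemma sq32: "(m::nat) mod 16 = 1 \<or> m mod 16 = 15 \<Longrightarrow> (m*m) mod 32 = 1"
proof -
  assume h: "m mod 16 = 1 \<or> m mod 16 = 15"
  define q where "q = m div 16"
  have m: "m = 16*q + m mod 16" using div_mult_mod_eq[of m 16] by (simp add: q_def mult.commute)
  from h show ?thesis
  proof
    assume "m mod 16 = 1"
    then have m1: "m = 16*q + 1" using m by simp
    have eq: "m*m = 32*(8*q*q + q) + 1" unfolding m1 by (simp add: algebra_simps)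
    have gen: "\<And>X::nat. (32*X + 1) mod 32 = 1" by simp
    show ?thesis using eq gen[of "8*q*q + q"] by (simp only:)
  next
    assume "m mod 16 = 15"
    then have m1: "m = 16*q + 15" using m by simp
    have eq: "m*m = 32*(8*q*q + 15*q + 7) + 1" unfolding m1 by (simp add: algebra_simps)
    have gen: "\<And>X::nat. (32*X + 1) mod 32 = 1" by simp
    show ?thesis using eq gen[of "8*q*q + 15*q + 7"] by (simp only:)
  qed
qed

lemma resM: "0 < (M::nat) \<Longrightarrow> (N::nat) mod M = r \<Longrightarrow> s mod M = 1 \<Longrightarrow> s \<le> N \<Longrightarrow> 1 \<le> r \<Longrightarrow> (N - s) mod M = r - 1"
proof -
  assume M: "0 < M" and a: "N mod M = r" "s mod M = 1" "s \<le> N" "1 \<le> r"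

  define x where "x = N div M"
  define y where "y = s div M"
  have N: "N = M*x + r" using a(1) div_mult_mod_eq[of N M] unfolding x_def by (simp add: mult.commute)
  have s: "s = M*y + 1" using a(2) div_mult_mod_eq[of s M] unfolding y_def by (simp add: mult.commute)
  have "y \<le> x" unfolding x_def y_def using a(3) by (rule div_le_mono)
  then have "N - s = M*(x-y) + (r-1)" using N s a(4) by (simp add: diff_mult_distrib2)
  moreover have "r - 1 < M" using a(1) M mod_less_divisor[OF M, of N] by linarith
  ultimately show ?thesis by simp
qed

lemma A0_zero: "b \<noteq> 0 \<Longrightarrow> (A4^0) $ b = 0" by simp


lemma allI_lt2: "P 0 \<Longrightarrow> P 1 \<Longrightarrow> \<forall>i<(2::nat). P i"
  by (auto simp: less_2_cases_iff)
lemma allI_lt3: "P 0 \<Longrightarrow> P 1 \<Longrightarrow> P 2 \<Longrightarrow> \<forall>i<(3::nat). P i"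
  by (auto simp: eval_nat_numeral less_Suc_eq)
lemma allI_lt4: "P 0 \<Longrightarrow> P 1 \<Longrightarrow> P 2 \<Longrightarrow> P 3 \<Longrightarrow> \<forall>i<(4::nat). P i"
  by (auto simp: eval_nat_numeral less_Suc_eq)
lemma allI_lt5: "P 0 \<Longrightarrow> P 1 \<Longrightarrow> P 2 \<Longrightarrow> P 3 \<Longrightarrow> P 4 \<Longrightarrow> \<forall>i<(5::nat). P i"
  by (auto simp: eval_nat_numeral less_Suc_eq)

lemma modlin: "(b::nat) = a*X + r \<Longrightarrow> b mod a = r mod a" by simp
lemma r1: "(8*J+7::nat) mod 8 = 7" "(8*J+7+2::nat) mod 8 = 1"
  using modlin[of "8*J+7" 8 "J" 7] modlin[of "8*J+7+2" 8 "J+1" 1] by simp_all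
lemma r2: "(16*J+15::nat) mod 8 = 7" "(16*J+15+2::nat) mod 8 = 1"
  using modlin[of "16*J+15" 8 "2*J+1" 7] modlin[of "16*J+15+2" 8 "2*J+2" 1] by simp_all
lemma r3: "(64*J+63::nat) mod 16 = 15" "(64*J+63+2::nat) mod 16 = 1"
  using modlin[of "64*J+63" 16 "4*J+3" 15] modlin[of "64*J+63+2" 16 "4*J+4" 1] by simp_all
lemma r4: "(128*J+127::nat) mod 16 = 15" "(128*J+127+2::nat) mod 16 = 1"
  using modlin[of "128*J+127" 16 "8*J+7" 15] modlin[of "128*J+127+2" 16 "8*J+8" 1] by simp_all
lemma m32_16: "(x::nat) mod 32 = 28 \<Longrightarrow> x mod 16 = 12"
proof -
  assume a: "x mod 32 = 28"
  have "(16::nat) dvd 32" by simp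
  then have "x mod 32 mod 16 = x mod 16" by (rule mod_mod_cancel)
  then show ?thesis using a by simp
qed
lemma m32_8: "(x::nat) mod 32 = 28 \<Longrightarrow> x mod 8 = 4"
proof -
  assume a: "x mod 32 = 28"
  have "(8::nat) dvd 32" by simp
  then have "x mod 32 mod 8 = x mod 8" by (rule mod_mod_cancel)
  then show ?thesis using a by simp
qed

lemma stmt1: "(4::int) dvd m_odd 0 (8*J+7) (16*N+9)"
proof -
  have "(2::int)^2 dvd m_odd 0 (8*J+7) (16*N+9)"
  proof (rule final_gen[of 3 _ 2])
    show "2^3 dvd (8*J+7+1)" by (simp add: dvd_def) (intro exI[of _ "J+1"], simp)
    show "2 \<le> (3::nat)" "1 \<le> 8*J+7" by simp_all
    fix m assume m: "1 \<le> m" "m*m \<le> 16*N+9"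
      and r: "m mod 2^(3-2+2) = (8*J+7) mod 2^(3-2+2) \<or> m mod 2^(3-2+2) = (8*J+7+2) mod 2^(3-2+2)"
    have "m mod 8 = 1 \<or> m mod 8 = 7" using r r1[of J] by auto
    then have "(m*m) mod 16 = 1" by (rule sq16)
    then have b: "(16*N+9 - m*m) mod 16 = 8" using resM[of 16 "16*N+9" 9 "m*m"] m by simp
    then have "16*N+9 - m*m \<noteq> 0" by auto
    then show "\<forall>i<2. (2::int)^2 dvd (-2)^i * (A4^i) $ (16*N+9 - m*m)"
      using A1_zero[of "16*N+9 - m*m"] b by (intro allI_lt2) simp_all
  qed
  then show ?thesis by simp
qed

lemma stmt2: "(4::int) dvd m_odd 0 (8*J+7) (16*N+13)"
proof -
  have "(2::int)^2 dvd m_odd 0 (8*J+7) (16*N+13)"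
  proof (rule final_gen[of 3 _ 2])
    show "2^3 dvd (8*J+7+1)" by (simp add: dvd_def) (intro exI[of _ "J+1"], simp)
    show "2 \<le> (3::nat)" "1 \<le> 8*J+7" by simp_all
    fix m assume m: "1 \<le> m" "m*m \<le> 16*N+13"
      and r: "m mod 2^(3-2+2) = (8*J+7) mod 2^(3-2+2) \<or> m mod 2^(3-2+2) = (8*J+7+2) mod 2^(3-2+2)"
    have "m mod 8 = 1 \<or> m mod 8 = 7" using r r1[of J] by auto
    then have "(m*m) mod 16 = 1" by (rule sq16)
    then have b: "(16*N+13 - m*m) mod 16 = 12" using resM[of 16 "16*N+13" 13 "m*m"] m by simp
    then have "16*N+13 - m*m \<noteq> 0" by auto
    then show "\<forall>i<2. (2::int)^2 dvd (-2)^i * (A4^i) $ (16*N+13 - m*m)"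
      using A1_zero[of "16*N+13 - m*m"] b by (intro allI_lt2) simp_all
  qed
  then show ?thesis by simp
qed

lemma stmt3: "(8::int) dvd m_odd 0 (16*J+15) (16*N+13)"
proof -
  have "(2::int)^3 dvd m_odd 0 (16*J+15) (16*N+13)"
  proof (rule final_gen[of 4 _ 3])
    show "2^4 dvd (16*J+15+1)" by (simp add: dvd_def) (intro exI[of _ "J+1"], simp)
    show "3 \<le> (4::nat)" "1 \<le> 16*J+15" by simp_all
    fix m assume m: "1 \<le> m" "m*m \<le> 16*N+13"
      and r: "m mod 2^(4-3+2) = (16*J+15) mod 2^(4-3+2) \<or> m mod 2^(4-3+2) = (16*J+15+2) mod 2^(4-3+2)"
    have "m mod 8 = 1 \<or> m mod 8 = 7" using r r2[of J] by auto
    then have "(m*m) mod 16 = 1" by (rule sq16)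
    then have b: "(16*N+13 - m*m) mod 16 = 12" using resM[of 16 "16*N+13" 13 "m*m"] m by simp
    then have "16*N+13 - m*m \<noteq> 0" by auto
    then show "\<forall>i<3. (2::int)^3 dvd (-2)^i * (A4^i) $ (16*N+13 - m*m)"
      using A1_zero[of "16*N+13 - m*m"] A2_zero[of "16*N+13 - m*m"] b by (intro allI_lt3) simp_all
  qed
  then show ?thesis by simp
qed

lemma stmt4: "(16::int) dvd m_odd 0 (64*J+63) (32*N+29)"
proof -
  have "(2::int)^4 dvd m_odd 0 (64*J+63) (32*N+29)"
  proof (rule final_gen[of 6 _ 4])
    show "2^6 dvd (64*J+63+1)" by (simp add: dvd_def) (intro exI[of _ "J+1"], simp)
    show "4 \<le> (6::nat)" "1 \<le> 64*J+63" by simp_all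
    fix m assume m: "1 \<le> m" "m*m \<le> 32*N+29"
      and r: "m mod 2^(6-4+2) = (64*J+63) mod 2^(6-4+2) \<or> m mod 2^(6-4+2) = (64*J+63+2) mod 2^(6-4+2)"
    note r3[of J]
    then have "m mod 16 = 1 \<or> m mod 16 = 15" using r by auto
    then have "(m*m) mod 32 = 1" by (rule sq32)
    then have b: "(32*N+29 - m*m) mod 32 = 28" using resM[of 32 "32*N+29" 29 "m*m"] m by simp
    then have b16: "(32*N+29 - m*m) mod 16 = 12" by (rule m32_16)
    have "32*N+29 - m*m \<noteq> 0" using b by auto
    then show "\<forall>i<4. (2::int)^4 dvd (-2)^i * (A4^i) $ (32*N+29 - m*m)"
      using A1_zero[of "32*N+29 - m*m"] A2_zero[of "32*N+29 - m*m"] A3_zero[of "32*N+29 - m*m"] b b16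
      by (intro allI_lt4) simp_all
  qed
  then show ?thesis by simp
qed

lemma stmt5: "(32::int) dvd m_odd 0 (128*J+127) (32*N+29)"
proof -
  have "(2::int)^5 dvd m_odd 0 (128*J+127) (32*N+29)"
  proof (rule final_gen[of 7 _ 5])
    show "2^7 dvd (128*J+127+1)" by (simp add: dvd_def) (intro exI[of _ "J+1"], simp)
    show "5 \<le> (7::nat)" "1 \<le> 128*J+127" by simp_all
    fix m assume m: "1 \<le> m" "m*m \<le> 32*N+29"
      and r: "m mod 2^(7-5+2) = (128*J+127) mod 2^(7-5+2) \<or> m mod 2^(7-5+2) = (128*J+127+2) mod 2^(7-5+2)"
    note r4[of J]
    then have "m mod 16 = 1 \<or> m mod 16 = 15" using r by auto
    then have "(m*m) mod 32 = 1" by (rule sq32)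
    then have b: "(32*N+29 - m*m) mod 32 = 28" using resM[of 32 "32*N+29" 29 "m*m"] m by simp
    then have b16: "(32*N+29 - m*m) mod 16 = 12" by (rule m32_16)
    have b8: "(32*N+29 - m*m) mod 8 = 4" using b by (rule m32_8)
    have "32*N+29 - m*m \<noteq> 0" using b by auto
    moreover have "even ((A4^4) $ (32*N+29 - m*m))" using A4_4_even[OF b8] .
    then have "(2::int)^5 dvd (-2)^4 * (A4^4) $ (32*N+29 - m*m)" by (auto elim!: evenE)
    ultimately show "\<forall>i<5. (2::int)^5 dvd (-2)^i * (A4^i) $ (32*N+29 - m*m)"
      using A1_zero[of "32*N+29 - m*m"] A2_zero[of "32*N+29 - m*m"] A3_zero[of "32*N+29 - m*m"] b b16
      by (intro allI_lt5) simp_all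
  qed
  then show ?thesis by simp
qed

theorem mainTheorem16:
  fixes J N :: nat
  shows "(4::int) dvd m_odd 0 (8*J+7) (16*N+9)
       \<and> (4::int) dvd m_odd 0 (8*J+7) (16*N+13)
       \<and> (8::int) dvd m_odd 0 (16*J+15) (16*N+13)
       \<and> (16::int) dvd m_odd 0 (64*J+63) (32*N+29)
       \<and> (32::int) dvd m_odd 0 (128*J+127) (32*N+29)"
  using stmt1 stmt2 stmt3 stmt4 stmt5 by blast


end
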